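(* Let $X$ and $Y$ be Hausdorff topological spaces and let $\varphi: Y \to X$ be continuous. Let $Z = Y \dot\cup_\varphi X$ be the set-theoretic disjoint union of $X$ and $Y$ with the topology generated by the base consisting of (a) all open subsets of $Y$, and (b) all sets of the form $[U,K] := U \cup (\varphi^{-1}(U) \setminus K)$, where $U$ is open in $X$ and $K$ is a compact subset of $Y$. Then: \begin{enumerate} \item $X$ is closed in $Z$, $Y$ is open in $Z$, and both $X$ and $Y$ inherit their original topologies as subspaces of $Z$. \item If $Y$ is locally compact, then $Z$ is Hausdorff. \item If $X$ is compact, then $Z$ is compact. \item If $X$ and $Y$ are first countable, $X$ is compact, $Y$ is locally compact, and $\varphi^{-1}(x)$ is compact for each $x \in X$, then $Z$ is first countable. \item If $X$ and $Y$ are zero-dimensional, $X$ is compact, and $Y$ is locally compact, then $Z$ is zero-dimensional. \item If $X$ is second countable and $Y^\omega$ is hereditarily separable, then $Z^\omega$ is hereditarily separable. \end{enumerate}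
   Context: A space is hereditarily separable if every subspace of it is separable. $Y^\omega$ and $Z^\omega$ denote countable Tychonoff powers. *)

theory Defs
  imports "HOL-Analysis.Analysis"
begin

definition bracket_set :: "'b topology \<Rightarrow> ('b \<Rightarrow> 'a) \<Rightarrow> 'a set \<Rightarrow> 'b set \<Rightarrow> ('b + 'a) set"
  where "bracket_set Y phi U K = Inr ` U \<union> Inl ` ({y \<in> topspace Y. phi y \<in> U} - K)"

definition adj_space :: "'b topology \<Rightarrow> 'a topology \<Rightarrow> ('b \<Rightarrow> 'a) \<Rightarrow> ('b + 'a) topology"
  where "adj_space Y X phi = topology_generated_by
     ({Inl ` V | V. openin Y V} \<union>
      {bracket_set Y phi U K | U K. openin X U \<and> compactin Y K})"

definition hereditarily_separable :: "'a topology \<Rightarrow> bool"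
  where "hereditarily_separable T \<longleftrightarrow>
           (\<forall>S. S \<subseteq> topspace T \<longrightarrow> separable_space (subtopology T S))"

abbreviation countable_power :: "'a topology \<Rightarrow> (nat \<Rightarrow> 'a) topology"
  where "countable_power T \<equiv> product_topology (\<lambda>_. T) UNIV"

end

theory Submission
  imports Defs
begin

locale adj =
  fixes X :: "'a topology" and Y :: "'b topology" and phi :: "'b \<Rightarrow> 'a"
  assumes HX: "Hausdorff_space X" and HY: "Hausdorff_space Y"
    and cphi: "continuous_map Y X phi"
begin

definition "BB \<equiv> {Inl ` V | V. openin Y V} \<union>
      {bracket_set Y phi U K | U K. openin X U \<and> compactin Y K}"

lemma BB_Inl: "openin Y V \<Longrightarrow> Inl ` V \<in> BB"
  unfolding BB_def by blast

lemma BB_br: "openin X U \<Longrightarrow> compactin Y K \<Longrightarrow> bracket_set Y phi U K \<in> BB"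
  unfolding BB_def by blast

lemma BB_cases:
  assumes "B \<in> BB"
  obtains V where "openin Y V" "B = Inl ` V"
    | U K where "openin X U" "compactin Y K" "B = bracket_set Y phi U K"
  using assms unfolding BB_def by blast
abbreviation "Z \<equiv> adj_space Y X phi"

lemma Z_eq: "Z = topology_generated_by BB"
  by (simp add: adj_space_def BB_def)

lemma phi_in: "y \<in> topspace Y \<Longrightarrow> phi y \<in> topspace X"
  using cphi by (auto simp: continuous_map_def)

lemma topspace_Z: "topspace Z = Inl ` topspace Y \<union> Inr ` topspace X"
proof -
  have a: "\<Union>BB \<subseteq> Inl ` topspace Y \<union> Inr ` topspace X"
  proof
    fix z assume "z \<in> \<Union>BB"
    then obtain B where B: "B \<in> BB" "z \<in> B" by blast
    show "z \<in> Inl ` topspace Y \<union> Inr ` topspace X"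
      using B(1)
    proof (cases rule: BB_cases)
      case (1 V)
      then show ?thesis using B openin_subset[of Y V] by blast
    next
      case (2 U K)
      then show ?thesis using B openin_subset[of X U] by (auto simp: bracket_set_def)
    qed
  qed
  have "Inl ` topspace Y \<in> BB" by (simp add: BB_Inl)
  moreover have "bracket_set Y phi (topspace X) {} \<in> BB" by (simp add: BB_br)
  moreover have "bracket_set Y phi (topspace X) {} = Inr ` topspace X \<union> Inl ` topspace Y"
    using phi_in by (auto simp: bracket_set_def)
  ultimately have "Inl ` topspace Y \<union> Inr ` topspace X \<subseteq> \<Union>BB" by blast
  then have "\<Union>BB = Inl ` topspace Y \<union> Inr ` topspace X" using a by blast
  then show ?thesis using Z_eq by simp
qed

lemma open_Inl: "openin Y V \<Longrightarrow> openin Z (Inl ` V)"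
  unfolding Z_eq by (rule topology_generated_by_Basis) (simp add: BB_Inl BB_br)

lemma open_br: "openin X U \<Longrightarrow> compactin Y K \<Longrightarrow> openin Z (bracket_set Y phi U K)"
  unfolding Z_eq by (rule topology_generated_by_Basis) (simp add: BB_Inl BB_br)

lemma compact_closed: "compactin Y K \<Longrightarrow> closedin Y K"
  using HY compactin_imp_closedin by blast

lemma BB_Int_mem:
  assumes "B1 \<in> BB" "B2 \<in> BB"
  shows "B1 \<inter> B2 \<in> BB"
proof -
  have f1: "Inl ` V1 \<inter> Inl ` V2 \<in> BB" if "openin Y V1" "openin Y V2" for V1 V2
  proof -
    have "openin Y (V1 \<inter> V2)" using that by auto
    moreover have "Inl ` V1 \<inter> Inl ` V2 = Inl ` (V1 \<inter> V2)" by auto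
    ultimately show ?thesis by (metis BB_Inl)
  qed
  have f2: "Inl ` V \<inter> bracket_set Y phi U K \<in> BB \<and> bracket_set Y phi U K \<inter> Inl ` V \<in> BB"
    if V: "openin Y V" and U: "openin X U" and K: "compactin Y K" for V U K
  proof -
    have o: "openin Y ({y \<in> topspace Y. phi y \<in> U})"
      using U cphi openin_continuous_map_preimage by blast
    have "openin Y (V \<inter> {y \<in> topspace Y. phi y \<in> U} - K)"
      using o V compact_closed[OF K] by (intro openin_diff openin_Int) auto
    moreover have "Inl ` V \<inter> bracket_set Y phi U K = Inl ` (V \<inter> {y \<in> topspace Y. phi y \<in> U} - K)"
      "bracket_set Y phi U K \<inter> Inl ` V = Inl ` (V \<inter> {y \<in> topspace Y. phi y \<in> U} - K)"
      by (auto simp: bracket_set_def)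
    ultimately show ?thesis by (metis BB_Inl)
  qed
  have f3: "bracket_set Y phi U1 K1 \<inter> bracket_set Y phi U2 K2 \<in> BB"
    if "openin X U1" "compactin Y K1" "openin X U2" "compactin Y K2" for U1 K1 U2 K2
  proof -
    have "bracket_set Y phi U1 K1 \<inter> bracket_set Y phi U2 K2 = bracket_set Y phi (U1 \<inter> U2) (K1 \<union> K2)"
      by (auto simp: bracket_set_def)
    moreover have "openin X (U1 \<inter> U2)" "compactin Y (K1 \<union> K2)"
      using that by (auto intro: compactin_Un)
    ultimately show ?thesis by (metis BB_br)
  qed
  show ?thesis
    using assms(1)
  proof (cases rule: BB_cases)
    case (1 V1)
    show ?thesis using assms(2)
    proof (cases rule: BB_cases)
      case (1 V2)
      then show ?thesis using f1 \<open>openin Y V1\<close> \<open>B1 = Inl ` V1\<close> by simp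
    next
      case (2 U K)
      then show ?thesis using f2 \<open>openin Y V1\<close> \<open>B1 = Inl ` V1\<close> by simp
    qed
  next
    case (2 U1 K1)
    show ?thesis using assms(2)
    proof (cases rule: BB_cases)
      case (1 V2)
      then show ?thesis using f2 2 by simp
    next
      case (2 U K)
      then show ?thesis using f3 \<open>openin X U1\<close> \<open>compactin Y K1\<close> \<open>B1 = bracket_set Y phi U1 K1\<close> by simp
    qed
  qed
qed

lemma BB_Int:
  assumes "B1 \<in> BB" "B2 \<in> BB" "z \<in> B1 \<inter> B2"
  shows "\<exists>B\<in>BB. z \<in> B \<and> B \<subseteq> B1 \<inter> B2"
  using BB_Int_mem[OF assms(1,2)] assms(3) by (intro bexI[of _ "B1 \<inter> B2"]) auto

lemma nbhd_BB:
  assumes "openin Z W" "z \<in> W"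
  shows "\<exists>B\<in>BB. z \<in> B \<and> B \<subseteq> W"
proof -
  have "generate_topology_on BB W" using assms(1) Z_eq openin_topology_generated_by by metis
  then show ?thesis using assms(2)
  proof (induction arbitrary: z)
    case Empty then show ?case by simp
  next
    case (Int a b)
    then obtain B1 B2 where "B1\<in>BB" "z \<in> B1" "B1 \<subseteq> a" "B2\<in>BB" "z \<in> B2" "B2 \<subseteq> b" by blast
    then show ?case using BB_Int[of B1 B2 z] by blast
  next
    case (UN K)
    then obtain k where "k \<in> K" "z \<in> k" by blast
    then show ?case using UN.IH[of k z] by blast
  next
    case (Basis s) then show ?case by blast
  qed
qed

lemma cont_Inl: "continuous_map Y Z Inl"
  unfolding Z_eq
proof (rule continuous_on_generated_topo)
  show "Inl ` topspace Y \<subseteq> \<Union>BB" using topspace_Z Z_eq by auto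
  fix B assume "B \<in> BB"
  then show "openin Y (Inl -` B \<inter> topspace Y)"
  proof (cases rule: BB_cases)
    case (1 V)
    then show ?thesis using openin_subset by (auto simp: inj_vimage_image_eq Int_absorb2)
  next
    case (2 U K)
    then have U: "openin X U" and K: "compactin Y K" and B: "B = bracket_set Y phi U K" by auto
    have o: "openin Y ({y \<in> topspace Y. phi y \<in> U})"
      using U cphi openin_continuous_map_preimage by blast
    have "Inl -` B \<inter> topspace Y = {y \<in> topspace Y. phi y \<in> U} - K"
      by (auto simp: B bracket_set_def)
    then show ?thesis using o compact_closed[OF K] by (simp add: openin_diff)
  qed
qed

lemma cont_Inr: "continuous_map X Z Inr"
  unfolding Z_eq
proof (rule continuous_on_generated_topo)
  show "Inr ` topspace X \<subseteq> \<Union>BB" using topspace_Z Z_eq by auto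
  fix B assume "B \<in> BB"
  then show "openin X (Inr -` B \<inter> topspace X)"
  proof (cases rule: BB_cases)
    case (1 V)
    moreover have "Inr -` Inl ` V = {}" by auto
    ultimately show ?thesis by (metis Int_empty_left openin_empty)
  next
    case (2 U K)
    then have U: "openin X U" and B: "B = bracket_set Y phi U K" by auto
    have "Inr -` B \<inter> topspace X = U" using openin_subset[OF U]
      by (auto simp: B bracket_set_def)
    then show ?thesis using U by simp
  qed
qed

lemma open_Y: "openin Z (Inl ` topspace Y)"
  by (simp add: open_Inl)

lemma closed_X: "closedin Z (Inr ` topspace X)"
proof -
  have "topspace Z - Inr ` topspace X = Inl ` topspace Y" using topspace_Z by auto
  then show ?thesis using open_Y topspace_Z by (simp add: closedin_def)
qed

lemma hom_Inr: "homeomorphic_map X (subtopology Z (Inr ` topspace X)) Inr"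
proof (rule bijective_open_imp_homeomorphic_map)
  show "continuous_map X (subtopology Z (Inr ` topspace X)) Inr"
    using cont_Inr by (simp add: continuous_map_in_subtopology)
  show "Inr ` topspace X = topspace (subtopology Z (Inr ` topspace X))"
    using topspace_Z by auto
  show "inj_on Inr (topspace X)" by simp
  show "open_map X (subtopology Z (Inr ` topspace X)) Inr"
    unfolding open_map_def
  proof (intro allI impI)
    fix U assume U: "openin X U"
    have "Inr ` U = bracket_set Y phi U {} \<inter> Inr ` topspace X"
      using openin_subset[OF U] by (auto simp: bracket_set_def)
    then show "openin (subtopology Z (Inr ` topspace X)) (Inr ` U)"
      using open_br[OF U] by (simp add: openin_subtopology_Int)
  qed
qed

lemma hom_Inl: "homeomorphic_map Y (subtopology Z (Inl ` topspace Y)) Inl"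
proof (rule bijective_open_imp_homeomorphic_map)
  show "continuous_map Y (subtopology Z (Inl ` topspace Y)) Inl"
    using cont_Inl by (simp add: continuous_map_in_subtopology)
  show "Inl ` topspace Y = topspace (subtopology Z (Inl ` topspace Y))"
    using topspace_Z by auto
  show "inj_on Inl (topspace Y)" by simp
  show "open_map Y (subtopology Z (Inl ` topspace Y)) Inl"
    unfolding open_map_def
  proof (intro allI impI)
    fix U assume U: "openin Y U"
    then show "openin (subtopology Z (Inl ` topspace Y)) (Inl ` U)"
    proof -
      have "Inl ` U = Inl ` U \<inter> Inl ` topspace Y" using openin_subset[OF U] by auto
      then show ?thesis using open_Inl[OF U] by (metis openin_subtopology_Int)
    qed
  qed
qed

end

context adj begin

lemma sep_YX:
  assumes LC: "locally_compact_space Y" and y: "y \<in> topspace Y" and x: "x \<in> topspace X"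
  shows "\<exists>U V. openin Z U \<and> openin Z V \<and> Inl y \<in> U \<and> Inr x \<in> V \<and> disjnt U V"
proof -
  obtain U K where U: "openin Y U" and K: "compactin Y K" and "y \<in> U" "U \<subseteq> K"
    using LC y unfolding locally_compact_space_def by blast
  show ?thesis
  proof (intro exI conjI)
    show "openin Z (Inl ` U)" using open_Inl[OF U] .
    show "openin Z (bracket_set Y phi (topspace X) K)" using open_br K by simp
    show "Inl y \<in> Inl ` U" using \<open>y \<in> U\<close> by simp
    show "Inr x \<in> bracket_set Y phi (topspace X) K" using x by (simp add: bracket_set_def)
    show "disjnt (Inl ` U) (bracket_set Y phi (topspace X) K)"
      using \<open>U \<subseteq> K\<close> by (auto simp: bracket_set_def disjnt_def)
  qed
qed

lemma Haus_Z:
  assumes LC: "locally_compact_space Y"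
  shows "Hausdorff_space Z"
  unfolding Hausdorff_space_def
proof (intro allI impI)
  fix z w assume H: "z \<in> topspace Z \<and> w \<in> topspace Z \<and> z \<noteq> w"
  show "\<exists>U V. openin Z U \<and> openin Z V \<and> z \<in> U \<and> w \<in> V \<and> disjnt U V"
  proof (cases z)
    case (Inl y)
    then have y: "y \<in> topspace Y" using H topspace_Z by auto
    show ?thesis
    proof (cases w)
      case (Inl y')
      then have y': "y' \<in> topspace Y" "y \<noteq> y'" using H topspace_Z \<open>z = Inl y\<close> by auto
      then obtain U V where "openin Y U" "openin Y V" "y \<in> U" "y' \<in> V" "disjnt U V"
        using HY y unfolding Hausdorff_space_def by blast
      then show ?thesis using Inl \<open>z = Inl y\<close>
        by (intro exI[of _ "Inl ` U"] exI[of _ "Inl ` V"]) (auto simp: open_Inl disjnt_def)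
    next
      case (Inr x)
      then have x: "x \<in> topspace X" using H topspace_Z by auto
      show ?thesis using sep_YX[OF LC y x] Inr \<open>z = Inl y\<close> by blast
    qed
  next
    case (Inr x)
    then have x: "x \<in> topspace X" using H topspace_Z by auto
    show ?thesis
    proof (cases w)
      case (Inl y)
      then have y: "y \<in> topspace Y" using H topspace_Z by auto
      show ?thesis using sep_YX[OF LC y x] Inl \<open>z = Inr x\<close> by (meson disjnt_sym)
    next
      case (Inr x')
      then have x': "x' \<in> topspace X" "x \<noteq> x'" using H topspace_Z \<open>z = Inr x\<close> by auto
      then obtain U V where U: "openin X U" and V: "openin X V" and "x \<in> U" "x' \<in> V" "disjnt U V"
        using HX x unfolding Hausdorff_space_def by blast
      show ?thesis
      proof (intro exI conjI)
        show "openin Z (bracket_set Y phi U {})" using open_br[OF U] by simp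
        show "openin Z (bracket_set Y phi V {})" using open_br[OF V] by simp
        show "z \<in> bracket_set Y phi U {}" using \<open>z = Inr x\<close> \<open>x \<in> U\<close> by (simp add: bracket_set_def)
        show "w \<in> bracket_set Y phi V {}" using Inr \<open>x' \<in> V\<close> by (simp add: bracket_set_def)
        show "disjnt (bracket_set Y phi U {}) (bracket_set Y phi V {})"
          using \<open>disjnt U V\<close> by (auto simp: bracket_set_def disjnt_def)
      qed
    qed
  qed
qed

end

context adj begin

lemma compact_Z:
  assumes CX: "compact_space X"
  shows "compact_space Z"
  unfolding compact_space_def compactin_def
proof (intro conjI allI impI)
  show "topspace Z \<subseteq> topspace Z" by simp
  fix \<U> assume H: "(\<forall>U\<in>\<U>. openin Z U) \<and> topspace Z \<subseteq> \<Union>\<U>"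
  have cX: "compactin Z (Inr ` topspace X)"
    using image_compactin[OF _ cont_Inr] CX compact_space_def by blast
  obtain \<F>1 where F1: "finite \<F>1" "\<F>1 \<subseteq> \<U>" "Inr ` topspace X \<subseteq> \<Union>\<F>1"
    using cX H topspace_Z unfolding compactin_def by (metis Un_subset_iff)
  define W where "W = \<Union>\<F>1"
  have oW: "openin Z W" using F1 H unfolding W_def by blast
  define \<V> where "\<V> = {U. openin X U \<and> (\<exists>K. compactin Y K \<and> bracket_set Y phi U K \<subseteq> W)}"
  have "topspace X \<subseteq> \<Union>\<V>"
  proof
    fix x assume x: "x \<in> topspace X"
    then have "Inr x \<in> W" using F1 W_def by blast
    then obtain B where B: "B \<in> BB" "Inr x \<in> B" "B \<subseteq> W" using nbhd_BB[OF oW] by blast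
    from B(1) show "x \<in> \<Union>\<V>"
    proof (cases rule: BB_cases)
      case (1 V)
      then show ?thesis using B by auto
    next
      case (2 U K)
      then have "x \<in> U" using B by (auto simp: bracket_set_def)
      then show ?thesis using 2 B unfolding \<V>_def by blast
    qed
  qed
  moreover have "\<forall>U\<in>\<V>. openin X U" unfolding \<V>_def by blast
  ultimately obtain \<F> where F: "finite \<F>" "\<F> \<subseteq> \<V>" "topspace X \<subseteq> \<Union>\<F>"
    using CX unfolding compact_space_def compactin_def by meson
  then have "\<forall>U\<in>\<F>. \<exists>K. compactin Y K \<and> bracket_set Y phi U K \<subseteq> W"
    unfolding \<V>_def by blast
  then obtain f where f: "\<And>U. U \<in> \<F> \<Longrightarrow> compactin Y (f U) \<and> bracket_set Y phi U (f U) \<subseteq> W"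
    by metis
  define KK where "KK = \<Union>(f ` \<F>)"
  have cKK: "compactin Y KK" unfolding KK_def using F(1) f by (intro compactin_Union) auto
  define C where "C = topspace Y - {y \<in> topspace Y. Inl y \<in> W}"
  have "C \<subseteq> KK"
  proof
    fix y assume y: "y \<in> C"
    then have "phi y \<in> topspace X" using phi_in C_def by blast
    then obtain U where "U \<in> \<F>" "phi y \<in> U" using F by blast
    show "y \<in> KK"
    proof (rule ccontr)
      assume "y \<notin> KK"
      then have "y \<notin> f U" using \<open>U \<in> \<F>\<close> KK_def by blast
      then have "Inl y \<in> bracket_set Y phi U (f U)"
        using y \<open>phi y \<in> U\<close> C_def by (auto simp: bracket_set_def)
      then show False using f[OF \<open>U \<in> \<F>\<close>] y C_def by blast
    qed
  qed
  moreover have "closedin Y C"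
    unfolding C_def using openin_continuous_map_preimage[OF cont_Inl oW] by (simp add: closedin_diff)
  ultimately have cC: "compactin Y C" using cKK closed_compactin by blast
  then have cIC: "compactin Z (Inl ` C)" using image_compactin[OF _ cont_Inl] by blast
  have "C \<subseteq> topspace Y" unfolding C_def by blast
  then have "Inl ` C \<subseteq> topspace Z" unfolding topspace_Z by auto
  then have "Inl ` C \<subseteq> \<Union>\<U>" using H by (meson subset_trans)
  moreover have "\<forall>U\<in>\<U>. openin Z U" using H by blast
  ultimately obtain \<F>2 where F2: "finite \<F>2" "\<F>2 \<subseteq> \<U>" "Inl ` C \<subseteq> \<Union>\<F>2"
    using cIC unfolding compactin_def by blast
  show "\<exists>\<F>. finite \<F> \<and> \<F> \<subseteq> \<U> \<and> topspace Z \<subseteq> \<Union>\<F>"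
  proof (intro exI conjI)
    show "finite (\<F>1 \<union> \<F>2)" using F1 F2 by simp
    show "\<F>1 \<union> \<F>2 \<subseteq> \<U>" using F1 F2 by simp
    show "topspace Z \<subseteq> \<Union>(\<F>1 \<union> \<F>2)"
    proof
      fix z assume "z \<in> topspace Z"
      then consider y where "y \<in> topspace Y" "z = Inl y" | x where "x \<in> topspace X" "z = Inr x"
        using topspace_Z by blast
      then show "z \<in> \<Union>(\<F>1 \<union> \<F>2)"
      proof cases
        case (1 y)
        then show ?thesis
        proof (cases "Inl y \<in> W")
          case True then show ?thesis using 1 W_def by blast
        next
          case False
          then have "y \<in> C" using 1 C_def by blast
          then show ?thesis using F2 1 by blast
        qed
      next
        case (2 x)
        then show ?thesis using F1 by blast
      qed
    qed
  qed
qed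

end

lemma cpt_nbhd:
  assumes LC: "locally_compact_space Y" and P: "compactin Y P"
  shows "\<exists>V L. openin Y V \<and> compactin Y L \<and> P \<subseteq> V \<and> V \<subseteq> L"
proof -
  define \<V> where "\<V> = {V. openin Y V \<and> (\<exists>K. compactin Y K \<and> V \<subseteq> K)}"
  have "P \<subseteq> \<Union>\<V>"
  proof
    fix p assume "p \<in> P"
    then have "p \<in> topspace Y" using P compactin_subset_topspace by blast
    then obtain U K where "openin Y U" "compactin Y K" "p \<in> U" "U \<subseteq> K"
      using LC unfolding locally_compact_space_def by blast
    then show "p \<in> \<Union>\<V>" unfolding \<V>_def by blast
  qed
  moreover have "\<forall>V\<in>\<V>. openin Y V" unfolding \<V>_def by blast
  ultimately obtain \<F> where F: "finite \<F>" "\<F> \<subseteq> \<V>" "P \<subseteq> \<Union>\<F>"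
    using P unfolding compactin_def by meson
  then have "\<forall>V\<in>\<F>. \<exists>K. compactin Y K \<and> V \<subseteq> K" unfolding \<V>_def by blast
  then obtain f where f: "\<And>V. V \<in> \<F> \<Longrightarrow> compactin Y (f V) \<and> V \<subseteq> f V" by metis
  show ?thesis
  proof (intro exI conjI)
    show "openin Y (\<Union>\<F>)" using F \<V>_def by blast
    show "compactin Y (\<Union>(f ` \<F>))" using F(1) f by (intro compactin_Union) auto
    show "P \<subseteq> \<Union>\<F>" by fact
    show "\<Union>\<F> \<subseteq> \<Union>(f ` \<F>)" using f by blast
  qed
qed

context adj begin

lemma fc_Z:
  assumes FX: "first_countable X" and FY: "first_countable Y" and LC: "locally_compact_space Y"
    and fib: "\<forall>x \<in> topspace X. compactin Y {y \<in> topspace Y. phi y = x}"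
  shows "first_countable Z"
  unfolding first_countable_def
proof
  fix z assume "z \<in> topspace Z"
  then consider y where "y \<in> topspace Y" "z = Inl y" | x where "x \<in> topspace X" "z = Inr x"
    using topspace_Z by blast
  then show "\<exists>\<B>. countable \<B> \<and> (\<forall>V\<in>\<B>. openin Z V) \<and> (\<forall>U. openin Z U \<and> z \<in> U \<longrightarrow> (\<exists>V\<in>\<B>. z \<in> V \<and> V \<subseteq> U))"
  proof cases
    case (1 y)
    then obtain \<B> where B: "countable \<B>" "\<forall>V\<in>\<B>. openin Y V"
      "\<And>U. openin Y U \<Longrightarrow> y \<in> U \<Longrightarrow> (\<exists>V\<in>\<B>. y \<in> V \<and> V \<subseteq> U)"
      using FY unfolding first_countable_def by meson
    show ?thesis
    proof (intro exI conjI allI impI)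
      show "countable ((image Inl) ` \<B>)" using B by simp
      show "\<forall>V\<in>(image Inl) ` \<B>. openin Z V" using B open_Inl by blast
      fix W assume W: "openin Z W \<and> z \<in> W"
      define W' where "W' = {y \<in> topspace Y. Inl y \<in> W}"
      have "openin Y W'" unfolding W'_def using openin_continuous_map_preimage[OF cont_Inl] W by blast
      moreover have "y \<in> W'" using W 1 W'_def by blast
      ultimately obtain V where "V \<in> \<B>" "y \<in> V" "V \<subseteq> W'" using B(3) by blast
      then show "\<exists>V\<in>(image Inl) ` \<B>. z \<in> V \<and> V \<subseteq> W"
        using 1 W'_def by (intro bexI[of _ "Inl ` V"]) auto
    qed
  next
    case (2 x)
    then obtain \<B> where B: "countable \<B>" "\<forall>V\<in>\<B>. openin X V"
      "\<And>U. openin X U \<Longrightarrow> x \<in> U \<Longrightarrow> (\<exists>V\<in>\<B>. x \<in> V \<and> V \<subseteq> U)"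
      using FX unfolding first_countable_def by meson
    obtain V L where V: "openin Y V" and L: "compactin Y L" and PV: "{y \<in> topspace Y. phi y = x} \<subseteq> V"
      and VL: "V \<subseteq> L"
      using cpt_nbhd[OF LC] fib 2 by meson
    show ?thesis
    proof (intro exI conjI allI impI)
      show "countable ((\<lambda>U. bracket_set Y phi U L) ` \<B>)" using B by simp
      show "\<forall>V\<in>(\<lambda>U. bracket_set Y phi U L) ` \<B>. openin Z V" using B open_br L by blast
      fix W assume W: "openin Z W \<and> z \<in> W"
      then obtain B0 where B0: "B0 \<in> BB" "Inr x \<in> B0" "B0 \<subseteq> W" using nbhd_BB 2 by blast
      from B0(1) show "\<exists>V\<in>(\<lambda>U. bracket_set Y phi U L) ` \<B>. z \<in> V \<and> V \<subseteq> W"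
      proof (cases rule: BB_cases)
        case (1 V) then show ?thesis using B0 by auto
      next
        case (2 U0 K)
        then have xU0: "x \<in> U0" using B0 by (auto simp: bracket_set_def)
        define C where "C = K - V"
        have "closedin Y C" unfolding C_def using compact_closed[OF \<open>compactin Y K\<close>] V
          by (simp add: closedin_diff)
        then have "compactin Y C" using closed_compactin[OF \<open>compactin Y K\<close>] C_def by blast
        then have "compactin X (phi ` C)" using image_compactin cphi by blast
        then have cl: "closedin X (phi ` C)" using compactin_imp_closedin HX by blast
        have xC: "x \<notin> phi ` C"
        proof
          assume "x \<in> phi ` C"
          then obtain c where "c \<in> C" "phi c = x" by blast
          moreover have "c \<in> topspace Y" using \<open>c \<in> C\<close> C_def compactin_subset_topspace[OF \<open>compactin Y K\<close>] by blast
          ultimately show False using PV C_def by blast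
        qed
        have "openin X (U0 - phi ` C)" using 2 cl by (simp add: openin_diff)
        moreover have "x \<in> U0 - phi ` C" using xU0 xC by blast
        ultimately obtain U where U: "U \<in> \<B>" "x \<in> U" "U \<subseteq> U0 - phi ` C" using B(3) by meson
        have "bracket_set Y phi U L \<subseteq> bracket_set Y phi U0 K"
        proof
          fix w assume w: "w \<in> bracket_set Y phi U L"
          show "w \<in> bracket_set Y phi U0 K"
          proof (cases w)
            case (Inl y)
            then have y: "y \<in> topspace Y" "phi y \<in> U" "y \<notin> L" using w by (auto simp: bracket_set_def)
            have "y \<notin> K"
            proof
              assume "y \<in> K"
              then have "y \<in> C" using y VL C_def by blast
              then show False using y U by blast
            qed
            then show ?thesis using Inl y U by (auto simp: bracket_set_def)
          next
            case (Inr x')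
            then show ?thesis using w U by (auto simp: bracket_set_def)
          qed
        qed
        moreover have "z \<in> bracket_set Y phi U L" using U \<open>z = Inr x\<close> by (simp add: bracket_set_def)
        ultimately show ?thesis using U(1) 2 B0(3)
          by (intro bexI[of _ "bracket_set Y phi U L"]) auto
      qed
    qed
  qed
qed

end

lemma cpt_open_nbhd:
  assumes LC: "locally_compact_space Y" and D: "Y dim_le 0" and W: "openin Y W" and y: "y \<in> W"
  shows "\<exists>C. openin Y C \<and> compactin Y C \<and> y \<in> C \<and> C \<subseteq> W"
proof -
  have "y \<in> topspace Y" using W y openin_subset by blast
  then obtain U K where U: "openin Y U" and K: "compactin Y K" and "y \<in> U" "U \<subseteq> K"
    using LC unfolding locally_compact_space_def by blast
  have "neighbourhood_base_of (\<lambda>U. closedin Y U \<and> openin Y U) Y"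
    using D dimension_le_0_neighbourhood_base_of_clopen by blast
  moreover have "openin Y (W \<inter> U)" "y \<in> W \<inter> U" using W U y \<open>y \<in> U\<close> by auto
  ultimately obtain U' V' where "openin Y U'" "closedin Y V'" "openin Y V'" "y \<in> U'" "U' \<subseteq> V'" "V' \<subseteq> W \<inter> U"
    unfolding neighbourhood_base_of by meson
  moreover have "compactin Y V'" using closed_compactin[OF K] calculation \<open>U \<subseteq> K\<close> by blast
  ultimately show ?thesis by blast
qed

context adj begin

lemma zd_Z:
  assumes DX: "X dim_le 0" and DY: "Y dim_le 0" and LC: "locally_compact_space Y"
  shows "Z dim_le 0"
  unfolding dimension_le_0_neighbourhood_base_of_clopen
proof (subst open_neighbourhood_base_of, blast, intro allI impI)
  fix W z assume W: "openin Z W \<and> z \<in> W"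
  then have "z \<in> topspace Z" using openin_subset by blast
  then consider y where "y \<in> topspace Y" "z = Inl y" | x where "x \<in> topspace X" "z = Inr x"
    using topspace_Z by blast
  then show "\<exists>U. (closedin Z U \<and> openin Z U) \<and> z \<in> U \<and> U \<subseteq> W"
  proof cases
    case (1 y)
    define W' where "W' = {y \<in> topspace Y. Inl y \<in> W}"
    have "openin Y W'" unfolding W'_def using openin_continuous_map_preimage[OF cont_Inl] W by blast
    moreover have "y \<in> W'" using W 1 W'_def by blast
    ultimately obtain C where C: "openin Y C" "compactin Y C" "y \<in> C" "C \<subseteq> W'"
      using cpt_open_nbhd[OF LC DY] by blast
    have "compactin Z (Inl ` C)" using image_compactin[OF C(2) cont_Inl] .
    then have "closedin Z (Inl ` C)" using compactin_imp_closedin[OF Haus_Z[OF LC]] by blast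
    moreover have "openin Z (Inl ` C)" using open_Inl[OF C(1)] .
    moreover have "Inl ` C \<subseteq> W" using C(4) W'_def by blast
    ultimately show ?thesis using 1 C(3) by blast
  next
    case (2 x)
    then obtain B0 where B0: "B0 \<in> BB" "Inr x \<in> B0" "B0 \<subseteq> W" using nbhd_BB W by blast
    from B0(1) show ?thesis
    proof (cases rule: BB_cases)
      case (1 V) then show ?thesis using B0 by auto
    next
      case (2 U0 K)
      then have xU0: "x \<in> U0" using B0 by (auto simp: bracket_set_def)
      have "neighbourhood_base_of (\<lambda>U. closedin X U \<and> openin X U) X"
        using DX dimension_le_0_neighbourhood_base_of_clopen by blast
      then obtain U' C' where "openin X U'" and C'c: "closedin X C'" and C'o: "openin X C'" and "x \<in> U'" "U' \<subseteq> C'" "C' \<subseteq> U0"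
        using 2 xU0 unfolding neighbourhood_base_of by meson
      define \<C> where "\<C> = {C. openin Y C \<and> compactin Y C}"
      have "K \<subseteq> \<Union>\<C>"
      proof
        fix k assume "k \<in> K"
        then have "k \<in> topspace Y" using 2 compactin_subset_topspace by blast
        then obtain C where "openin Y C" "compactin Y C" "k \<in> C"
          using cpt_open_nbhd[OF LC DY, of "topspace Y" k] by auto
        then show "k \<in> \<Union>\<C>" unfolding \<C>_def by blast
      qed
      moreover have "\<forall>C\<in>\<C>. openin Y C" unfolding \<C>_def by blast
      ultimately obtain \<F> where F: "finite \<F>" "\<F> \<subseteq> \<C>" "K \<subseteq> \<Union>\<F>"
        using 2 unfolding compactin_def by meson
      define K' where "K' = \<Union>\<F>"
      have K'o: "openin Y K'" using F \<C>_def K'_def by blast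
      have K'c: "compactin Y K'" unfolding K'_def using F \<C>_def by (intro compactin_Union) auto
      have K'sub: "K' \<subseteq> topspace Y" using K'o openin_subset by blast
      define T where "T = bracket_set Y phi C' K'"
      have oT: "openin Z T" using open_br[OF C'o K'c] T_def by simp
      have Csub: "C' \<subseteq> topspace X" using C'o openin_subset by blast
      have eq: "topspace Z - T = bracket_set Y phi (topspace X - C') {} \<union> Inl ` K'"
      proof
        show "topspace Z - T \<subseteq> bracket_set Y phi (topspace X - C') {} \<union> Inl ` K'"
        proof
          fix w assume w: "w \<in> topspace Z - T"
          then consider y where "y \<in> topspace Y" "w = Inl y" | x' where "x' \<in> topspace X" "w = Inr x'"
            using topspace_Z by blast
          then show "w \<in> bracket_set Y phi (topspace X - C') {} \<union> Inl ` K'"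
          proof cases
            case (1 y)
            then have "phi y \<in> topspace X" using phi_in by blast
            then show ?thesis using 1 w unfolding T_def bracket_set_def by auto
          next
            case (2 x')
            then show ?thesis using w unfolding T_def bracket_set_def by auto
          qed
        qed
        show "bracket_set Y phi (topspace X - C') {} \<union> Inl ` K' \<subseteq> topspace Z - T"
          using K'sub unfolding T_def bracket_set_def topspace_Z by auto
      qed
      have "openin X (topspace X - C')" using C'c closedin_def by blast
      then have "openin Z (bracket_set Y phi (topspace X - C') {})" using open_br by simp
      then have "openin Z (topspace Z - T)"
        unfolding eq using open_Inl[OF K'o] by (rule openin_Un)
      moreover have "T \<subseteq> topspace Z" using oT openin_subset by blast
      ultimately have "closedin Z T" by (simp add: closedin_def)
      moreover have "z \<in> T" using \<open>z = Inr x\<close> \<open>x \<in> U'\<close> \<open>U' \<subseteq> C'\<close> T_def by (auto simp: bracket_set_def)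
      moreover have "T \<subseteq> B0"
        using 2 \<open>C' \<subseteq> U0\<close> F(3) K'_def T_def by (auto simp: bracket_set_def)
      ultimately show ?thesis using oT B0(3) by blast
    qed
  qed
qed

end

lemma hs_char:
  assumes "S \<subseteq> topspace T"
  shows "separable_space (subtopology T S) \<longleftrightarrow>
         (\<exists>C. countable C \<and> C \<subseteq> S \<and> (\<forall>s\<in>S. \<forall>W. openin T W \<and> s \<in> W \<longrightarrow> C \<inter> W \<noteq> {}))"
proof -
  have ts: "topspace (subtopology T S) = S" using assms by auto
  have cl: "subtopology T S closure_of C = S \<longleftrightarrow> (\<forall>s\<in>S. \<forall>W. openin T W \<and> s \<in> W \<longrightarrow> C \<inter> W \<noteq> {})"
    if "C \<subseteq> S" for C
  proof -
    have "subtopology T S closure_of C = S \<inter> T closure_of C"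
    proof -
      have "S \<inter> C = C" using that by blast
      then show ?thesis by (simp only: closure_of_subtopology)
    qed
    moreover have "S \<subseteq> T closure_of C \<longleftrightarrow> (\<forall>s\<in>S. \<forall>W. openin T W \<and> s \<in> W \<longrightarrow> C \<inter> W \<noteq> {})"
    proof
      assume L: "S \<subseteq> T closure_of C"
      show "\<forall>s\<in>S. \<forall>W. openin T W \<and> s \<in> W \<longrightarrow> C \<inter> W \<noteq> {}"
      proof (intro ballI allI impI)
        fix s W assume "s \<in> S" "openin T W \<and> s \<in> W"
        then have "s \<in> T closure_of C" using L by blast
        then obtain y where "y \<in> C" "y \<in> W" unfolding in_closure_of using \<open>openin T W \<and> s \<in> W\<close> by blast
        then show "C \<inter> W \<noteq> {}" by blast
      qed
    next
      assume R: "\<forall>s\<in>S. \<forall>W. openin T W \<and> s \<in> W \<longrightarrow> C \<inter> W \<noteq> {}"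
      show "S \<subseteq> T closure_of C"
      proof
        fix s assume s: "s \<in> S"
        show "s \<in> T closure_of C"
          unfolding in_closure_of
        proof (intro conjI allI impI)
          show "s \<in> topspace T" using s assms by blast
          fix W assume "s \<in> W \<and> openin T W"
          then have "C \<inter> W \<noteq> {}" using R s by blast
          then show "\<exists>y. y \<in> C \<and> y \<in> W" by blast
        qed
      qed
    qed
    ultimately show ?thesis by (metis inf.absorb_iff1)
  qed
  show ?thesis
    unfolding separable_space_def ts
  proof
    assume "\<exists>C. countable C \<and> C \<subseteq> S \<and> subtopology T S closure_of C = S"
    then obtain C where c: "countable C" "C \<subseteq> S" "subtopology T S closure_of C = S" by blast
    show "\<exists>C. countable C \<and> C \<subseteq> S \<and> (\<forall>s\<in>S. \<forall>W. openin T W \<and> s \<in> W \<longrightarrow> C \<inter> W \<noteq> {})"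
      using c iffD1[OF cl[OF c(2)] c(3)] by blast
  next
    assume "\<exists>C. countable C \<and> C \<subseteq> S \<and> (\<forall>s\<in>S. \<forall>W. openin T W \<and> s \<in> W \<longrightarrow> C \<inter> W \<noteq> {})"
    then obtain C where c: "countable C" "C \<subseteq> S" "\<forall>s\<in>S. \<forall>W. openin T W \<and> s \<in> W \<longrightarrow> C \<inter> W \<noteq> {}" by blast
    show "\<exists>C. countable C \<and> C \<subseteq> S \<and> subtopology T S closure_of C = S"
      using c(1,2) iffD2[OF cl[OF c(2)] c(3)] by blast
  qed
qed

context adj begin

lemma exists_D:
  fixes A :: "nat set" and S' :: "(nat \<Rightarrow> 'b + 'a) set"
  assumes HSY: "hereditarily_separable (countable_power Y)" and A: "finite A"
    and S': "\<forall>s\<in>S'. \<forall>i\<in>A. s i \<in> Inl ` topspace Y"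
  shows "\<exists>D. countable D \<and> D \<subseteq> S' \<and> (S' \<noteq> {} \<longrightarrow> D \<noteq> {}) \<and>
     (\<forall>s\<in>S'. \<forall>V. (\<forall>i\<in>A. openin Y (V i)) \<and> (\<forall>i\<in>A. s i \<in> Inl ` V i) \<longrightarrow> (\<exists>d\<in>D. \<forall>i\<in>A. d i \<in> Inl ` V i))"
proof (cases "S' = {}")
  case True then show ?thesis by (intro exI[of _ "{}"]) auto
next
  case ne: False
  show ?thesis
  proof (cases "topspace Y = {}")
    case True
    then have "A = {}" using S' ne by blast
    then show ?thesis using ne by (intro exI[of _ "{SOME s. s \<in> S'}"]) (auto simp: some_in_eq)
  next
    case False
    define y0 where "y0 = (SOME y. y \<in> topspace Y)"
    have "\<exists>y. y \<in> topspace Y" using False by blast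
    then have y0: "y0 \<in> topspace Y" unfolding y0_def by (rule someI_ex)
    define g :: "(nat \<Rightarrow> 'b + 'a) \<Rightarrow> nat \<Rightarrow> 'b" where "g = (\<lambda>s i. if i \<in> A then projl (s i) else y0)"
    have gin: "g s i \<in> topspace Y" if "s \<in> S'" for s i
    proof (cases "i \<in> A")
      case True
      have "s i \<in> Inl ` topspace Y" using S' that True by simp
      then obtain y where y: "y \<in> topspace Y" "s i = Inl y" by (rule imageE) simp
      show ?thesis using True y unfolding g_def by simp
    next
      case False then show ?thesis by (simp add: g_def y0)
    qed
    have sub: "g ` S' \<subseteq> topspace (countable_power Y)"
    proof
      fix t assume "t \<in> g ` S'"
      then obtain s where "s \<in> S'" "t = g s" by blast
      then show "t \<in> topspace (countable_power Y)"
        unfolding topspace_product_topology PiE_UNIV_domain using gin by blast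
    qed
    have sep: "separable_space (subtopology (countable_power Y) (g ` S'))"
      using HSY[unfolded hereditarily_separable_def, rule_format, OF sub] .
    obtain E where E: "countable E" "E \<subseteq> g ` S'"
      "\<forall>t\<in>g ` S'. \<forall>W. openin (countable_power Y) W \<and> t \<in> W \<longrightarrow> E \<inter> W \<noteq> {}"
      using iffD1[OF hs_char[OF sub] sep] by blast
    define h where "h e = (SOME s. s \<in> S' \<and> g s = e)" for e
    have h: "h e \<in> S' \<and> g (h e) = e" if "e \<in> E" for e
    proof -
      have "\<exists>s. s \<in> S' \<and> g s = e" using that E(2) by blast
      then show ?thesis unfolding h_def by (rule someI_ex)
    qed
    show ?thesis
    proof (intro exI conjI impI allI ballI)
      show "countable (h ` E)" using E by simp
      show "h ` E \<subseteq> S'" using h by blast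
      obtain s0 where "s0 \<in> S'" using ne by blast
      have "E \<inter> topspace (countable_power Y) \<noteq> {}"
        using E(3) \<open>s0 \<in> S'\<close> sub by blast
      then show "h ` E \<noteq> {}" by blast
      fix s V assume s: "s \<in> S'" and V: "(\<forall>i\<in>A. openin Y (V i)) \<and> (\<forall>i\<in>A. s i \<in> Inl ` V i)"
      define Ob where "Ob = PiE UNIV (\<lambda>i. if i \<in> A then V i else topspace Y)"
      have "openin (countable_power Y) Ob"
        unfolding Ob_def
      proof (rule product_topology_basis)
        show "openin Y (if i \<in> A then V i else topspace Y)" for i using V by auto
        show "finite {i. (if i \<in> A then V i else topspace Y) \<noteq> topspace Y}"
          by (rule finite_subset[OF _ A]) auto
      qed
      moreover have "g s \<in> Ob"
      proof -
        have "g s i \<in> (if i \<in> A then V i else topspace Y)" for i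
        proof (cases "i \<in> A")
          case True
          then obtain y where "y \<in> V i" "s i = Inl y" using V by blast
          then show ?thesis using True by (simp add: g_def)
        next
          case False then show ?thesis by (simp add: g_def y0)
        qed
        then show ?thesis unfolding Ob_def by (auto simp: PiE_def extensional_def)
      qed
      ultimately obtain e where e: "e \<in> E" "e \<in> Ob" using E(3) s by blast
      show "\<exists>d\<in>h ` E. \<forall>i\<in>A. d i \<in> Inl ` V i"
      proof (intro bexI[of _ "h e"] ballI)
        fix i assume i: "i \<in> A"
        have "h e \<in> S'" "g (h e) = e" using h[OF e(1)] by auto
        then obtain y where y: "h e i = Inl y" using S' i by blast
        have "e i \<in> (if i \<in> A then V i else topspace Y)" using e(2) unfolding Ob_def PiE_iff by blast
        then have "e i \<in> V i" using i by simp
        moreover have "e i = y"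
        proof -
          have "e i = g (h e) i" using \<open>g (h e) = e\<close> by simp
          also have "\<dots> = y" using y i by (simp add: g_def)
          finally show ?thesis .
        qed
        ultimately show "h e i \<in> Inl ` V i" using y by blast
      next
        show "h e \<in> h ` E" using e by blast
      qed
    qed
  qed
qed


lemma hs_Z:
  assumes SX: "second_countable X" and HSY: "hereditarily_separable (countable_power Y)"
  shows "hereditarily_separable (countable_power Z)"
  unfolding hereditarily_separable_def
proof (intro allI impI)
  fix S assume Ssub: "S \<subseteq> topspace (countable_power Z)"
  have Sco: "s i \<in> topspace Z" if "s \<in> S" for s i
  proof -
    have "s \<in> PiE UNIV (\<lambda>_. topspace Z)" using Ssub that by auto
    then show ?thesis unfolding PiE_iff by blast
  qed
  obtain \<B> where B: "countable \<B>" "\<forall>V\<in>\<B>. openin X V"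
    "\<forall>U x. openin X U \<and> x \<in> U \<longrightarrow> (\<exists>V\<in>\<B>. x \<in> V \<and> V \<subseteq> U)"
    using SX unfolding second_countable_def by blast
  define S' where "S' n A Bs = {s\<in>S. \<forall>i<n. (i\<in>A \<longrightarrow> s i \<in> Inl ` topspace Y) \<and> (i\<notin>A \<longrightarrow> s i \<in> Inr ` Bs i)}"
    for n :: nat and A :: "nat set" and Bs :: "nat \<Rightarrow> 'a set"
  define P where "P n A Bs D \<longleftrightarrow> countable D \<and> D \<subseteq> S' n A Bs \<and> (S' n A Bs \<noteq> {} \<longrightarrow> D \<noteq> {}) \<and>
     (\<forall>s\<in>S' n A Bs. \<forall>V. (\<forall>i\<in>A. openin Y (V i)) \<and> (\<forall>i\<in>A. s i \<in> Inl ` V i) \<longrightarrow> (\<exists>d\<in>D. \<forall>i\<in>A. d i \<in> Inl ` V i))"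
    for n A Bs D
  have exP: "\<exists>D. P n A Bs D" if nA: "A \<subseteq> {..<n}" for n A Bs
  proof -
    have fA: "finite A" using nA finite_subset by blast
    have "\<forall>s\<in>S' n A Bs. \<forall>i\<in>A. s i \<in> Inl ` topspace Y"
    proof (intro ballI)
      fix s i assume "s \<in> S' n A Bs" "i \<in> A"
      moreover have "i < n" using nA \<open>i \<in> A\<close> by blast
      ultimately show "s i \<in> Inl ` topspace Y" unfolding S'_def by blast
    qed
    from exists_D[OF HSY fA this] show ?thesis unfolding P_def .
  qed
  define Dn where "Dn n A Bs = (SOME D. P n A Bs D)" for n A Bs
  have PD: "P n A Bs (Dn n A Bs)" if "A \<subseteq> {..<n}" for n A Bs
    unfolding Dn_def using exP[OF that] by (rule someI_ex)
  define D where "D = (\<Union>n. \<Union>A\<in>Pow {..<n}. \<Union>Bs\<in>PiE ({..<n} - A) (\<lambda>_. \<B>). Dn n A Bs)"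
  have cD: "countable D"
    unfolding D_def
  proof (intro countable_UN)
    show "countable (UNIV :: nat set)" by simp
    fix n A Bs
    assume "A \<in> Pow {..<(n::nat)}"
    then have "A \<subseteq> {..<n}" by blast
    then have "P n A Bs (Dn n A Bs)" by (rule PD)
    then show "countable (Dn n A Bs)" unfolding P_def by (elim conjE)
  next
    fix n :: nat
    show "countable (Pow {..<n})" by (simp add: countable_finite)
  next
    fix n :: nat and A
    show "countable (PiE ({..<n} - A) (\<lambda>_. \<B>))" using B(1) by (intro countable_PiE) auto
  qed
  have DS: "D \<subseteq> S"
  proof
    fix d assume "d \<in> D"
    then obtain n A Bs where nA: "A \<in> Pow {..<n}" "d \<in> Dn n A Bs" unfolding D_def by blast
    then have "A \<subseteq> {..<n}" by blast
    then have "P n A Bs (Dn n A Bs)" by (rule PD)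
    then have "Dn n A Bs \<subseteq> S' n A Bs" unfolding P_def by (elim conjE)
    then have "d \<in> S' n A Bs" using nA by blast
    then show "d \<in> S" unfolding S'_def by blast
  qed
  have dense: "D \<inter> W \<noteq> {}" if s: "s \<in> S" and W: "openin (countable_power Z) W" "s \<in> W" for s W
  proof -
    obtain U where U: "s \<in> PiE UNIV U" "\<forall>i. openin Z (U i)" "finite {i. U i \<noteq> topspace Z}" "PiE UNIV U \<subseteq> W"
      using product_topology_open_contains_basis[OF W] by blast
    obtain n where n: "{i. U i \<noteq> topspace Z} \<subseteq> {..<n}" using U(3) finite_nat_iff_bounded by blast
    have sU: "s i \<in> U i" for i using U(1) unfolding PiE_iff by blast
    define A where "A = {i. i < n \<and> s i \<in> Inl ` topspace Y}"
    have An: "A \<subseteq> {..<n}" unfolding A_def by blast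
    have exB: "\<exists>B\<in>\<B>. s i \<in> Inr ` B \<and> Inr ` B \<subseteq> U i" if i: "i \<in> {..<n} - A" for i
    proof -
      have "s i \<notin> Inl ` topspace Y" using i A_def by blast
      then have "s i \<in> Inr ` topspace X" using Sco[OF s] topspace_Z by blast
      then obtain x where x: "x \<in> topspace X" "s i = Inr x" by blast
      define pre where "pre = {x \<in> topspace X. Inr x \<in> U i}"
      have opre: "openin X pre" unfolding pre_def by (rule openin_continuous_map_preimage[OF cont_Inr U(2)[rule_format]])
      have xpre: "x \<in> pre" unfolding pre_def using x sU[of i] by simp
      have "\<exists>V\<in>\<B>. x \<in> V \<and> V \<subseteq> pre" using B(3) opre xpre by blast
      then obtain V where "V \<in> \<B>" "x \<in> V" "V \<subseteq> pre" by blast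
      then show ?thesis using x unfolding pre_def by blast
    qed
    then obtain f where f: "\<And>i. i \<in> {..<n} - A \<Longrightarrow> f i \<in> \<B> \<and> s i \<in> Inr ` f i \<and> Inr ` f i \<subseteq> U i"
      by metis
    define Bs where "Bs = restrict f ({..<n} - A)"
    have BsP: "Bs \<in> PiE ({..<n} - A) (\<lambda>_. \<B>)" unfolding Bs_def using f by (simp add: restrict_PiE_iff)
    define V where "V i = {y \<in> topspace Y. Inl y \<in> U i}" for i
    have Vo: "openin Y (V i)" for i unfolding V_def by (rule openin_continuous_map_preimage[OF cont_Inl U(2)[rule_format]])
    have sV: "s i \<in> Inl ` V i" if iA: "i \<in> A" for i
    proof -
      have "s i \<in> Inl ` topspace Y" using iA A_def by blast
      then obtain y where y: "y \<in> topspace Y" "s i = Inl y" by blast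
      then have "y \<in> V i" unfolding V_def using sU[of i] by simp
      then show ?thesis using y by blast
    qed
    have sS': "s \<in> S' n A Bs"
      unfolding S'_def
    proof (intro CollectI conjI allI impI)
      show "s \<in> S" by fact
      fix i assume "i < n"
      show "i \<in> A \<Longrightarrow> s i \<in> Inl ` topspace Y" unfolding A_def by blast
      assume "i \<notin> A"
      then have "i \<in> {..<n} - A" using \<open>i < n\<close> by blast
      then show "s i \<in> Inr ` Bs i" using f unfolding Bs_def by simp
    qed
    have PP: "P n A Bs (Dn n A Bs)" by (rule PD[OF An])
    then have PP4: "\<forall>s\<in>S' n A Bs. \<forall>V. (\<forall>i\<in>A. openin Y (V i)) \<and> (\<forall>i\<in>A. s i \<in> Inl ` V i) \<longrightarrow> (\<exists>d\<in>Dn n A Bs. \<forall>i\<in>A. d i \<in> Inl ` V i)"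
      unfolding P_def by blast
    have PP2: "Dn n A Bs \<subseteq> S' n A Bs" using PP unfolding P_def by (elim conjE)
    have "(\<forall>i\<in>A. openin Y (V i)) \<and> (\<forall>i\<in>A. s i \<in> Inl ` V i)" using Vo sV by blast
    then obtain d where d: "d \<in> Dn n A Bs" "\<forall>i\<in>A. d i \<in> Inl ` V i"
      using PP4 sS' by blast
    have dS': "d \<in> S' n A Bs" using PP2 d(1) by blast
    then have dS: "d \<in> S" unfolding S'_def by blast
    have dD: "d \<in> D" unfolding D_def using An BsP d(1) by blast
    have "d i \<in> U i" for i
    proof (cases "i \<in> A")
      case True
      then have "d i \<in> Inl ` V i" using d(2) by blast
      then show ?thesis unfolding V_def by auto
    next
      case False
      show ?thesis
      proof (cases "i < n")
        case True
        then have i: "i \<in> {..<n} - A" using False by blast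
        then have "d i \<in> Inr ` Bs i" using dS' False True unfolding S'_def by blast
        then show ?thesis using f[OF i] i unfolding Bs_def by auto
      next
        case False
        then have "U i = topspace Z" using n by (meson lessThan_iff mem_Collect_eq subsetD)
        then show ?thesis using Sco[OF dS] by simp
      qed
    qed
    then have "d \<in> PiE UNIV U" unfolding PiE_iff by simp
    then have "d \<in> W" using U(4) by blast
    then show ?thesis using dD by blast
  qed
  show "separable_space (subtopology (countable_power Z) S)"
    unfolding hs_char[OF Ssub]
    using cD DS dense by blast
qed

end

theorem lemma3p2:
  fixes X :: "'a topology" and Y :: "'b topology" and phi :: "'b \<Rightarrow> 'a"
  assumes "Hausdorff_space X" and "Hausdorff_space Y"
    and "continuous_map Y X phi"
  defines "Z \<equiv> adj_space Y X phi"
  shows "(closedin Z (Inr ` topspace X) \<and> openin Z (Inl ` topspace Y)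
          \<and> homeomorphic_map X (subtopology Z (Inr ` topspace X)) Inr
          \<and> homeomorphic_map Y (subtopology Z (Inl ` topspace Y)) Inl)
     \<and> (locally_compact_space Y \<longrightarrow> Hausdorff_space Z)
     \<and> (compact_space X \<longrightarrow> compact_space Z)
     \<and> (first_countable X \<and> first_countable Y \<and> compact_space X \<and> locally_compact_space Y
         \<and> (\<forall>x \<in> topspace X. compactin Y {y \<in> topspace Y. phi y = x})
         \<longrightarrow> first_countable Z)
     \<and> (X dim_le 0 \<and> Y dim_le 0 \<and> compact_space X \<and> locally_compact_space Y
         \<longrightarrow> Z dim_le 0)
     \<and> (second_countable X \<and> hereditarily_separable (countable_power Y)
         \<longrightarrow> hereditarily_separable (countable_power Z))"
proof -
  interpret adj X Y phi using assms(1-3) by unfold_locales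
  show ?thesis unfolding Z_def
    apply (intro conjI impI)
    subgoal by (rule closed_X)
    subgoal by (rule open_Y)
    subgoal by (rule hom_Inr)
    subgoal by (rule hom_Inl)
    subgoal by (rule Haus_Z)
    subgoal by (rule compact_Z)
    subgoal by (elim conjE) (rule fc_Z)
    subgoal by (elim conjE) (rule zd_Z)
    subgoal by (elim conjE) (rule hs_Z)
    done
qed

end
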